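(* Let $a\ge 2$ be even and let $c$ be an integer with $c\neq a$ and $\frac a2<c$. Then $U=\{(a,-a),(c,-c)\}\subseteq\mathcal{B}$ is unavoidable.
   Context: The bicyclic inverse semigroup is $\mathcal{B}=\{(a,b)\in\mathbb{Z}\times\mathbb{Z}\mid a\ge 0,\ a+b\ge 0\}$ with multiplication $(a,b)(c,d)=(\max\{c+d,a\}-d,\ b+d)$. A subset $U\subseteq\mathcal{B}$ is called avoidable if $\mathcal{B}$ can be partitioned into two subsets $A$ and $B$ such that no element of $U$ can be written as a product $xy$ of two distinct elements $x\neq y$ both in $A$, or both in $B$. A set is unavoidable if it is not avoidable. *)

theory Defs
  imports Main
begin

definition bicyclic :: "(int \<times> int) set" where
  "bicyclic = {(a, b). a \<ge> 0 \<and> a + b \<ge> 0}"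

fun bmult :: "int \<times> int \<Rightarrow> int \<times> int \<Rightarrow> int \<times> int" where
  "bmult (a, b) (c, d) = (max (c + d) a - d, b + d)"

definition avoidable :: "(int \<times> int) set \<Rightarrow> bool" where
  "avoidable U \<longleftrightarrow> (\<exists>A B. A \<union> B = bicyclic \<and> A \<inter> B = {} \<and>
     (\<forall>x\<in>A. \<forall>y\<in>A. x \<noteq> y \<longrightarrow> bmult x y \<notin> U) \<and>
     (\<forall>x\<in>B. \<forall>y\<in>B. x \<noteq> y \<longrightarrow> bmult x y \<notin> U))"

definition unavoidable :: "(int \<times> int) set \<Rightarrow> bool" where
  "unavoidable U \<longleftrightarrow> \<not> avoidable U"

end

theory Submission
  imports Defs
begin

theorem lemma3p2:
  fixes a c :: int
  assumes "a \<ge> 2" and "even a" and "c \<noteq> a" and "a div 2 < c"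
  shows "unavoidable {(a, -a), (c, -c)}"
proof -
  define k where "k = a div 2"
  have ak: "a = 2 * k" using assms(2) unfolding k_def by auto
  have k1: "k \<ge> 1" using assms(1) ak by simp
  have ck: "c > k" using assms(4) k_def by simp
  have cne: "c \<noteq> 2 * k" using assms(3) ak by simp
  define x where "x = (k, -k)"
  define y where "y = (k + 1, -k)"
  define z where "z = (c - k, k - c)"
  have xB: "x \<in> bicyclic" and yB: "y \<in> bicyclic" and zB: "z \<in> bicyclic"
    using k1 ck by (auto simp: bicyclic_def x_def y_def z_def)
  have xy: "x \<noteq> y" "bmult x y \<in> {(a, -a), (c, -c)}"
    using k1 ak by (auto simp: x_def y_def max_def)
  have yz: "y \<noteq> z" "bmult z y \<in> {(a, -a), (c, -c)}"
    using k1 ck cne by (auto simp: z_def y_def max_def)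
  have xz: "x \<noteq> z" "bmult x z \<in> {(a, -a), (c, -c)}"
    using k1 ck cne by (auto simp: z_def x_def max_def)
  show ?thesis
    unfolding unavoidable_def avoidable_def
  proof
    assume "\<exists>A B. A \<union> B = bicyclic \<and> A \<inter> B = {} \<and>
     (\<forall>x\<in>A. \<forall>y\<in>A. x \<noteq> y \<longrightarrow> bmult x y \<notin> {(a, -a), (c, -c)}) \<and>
     (\<forall>x\<in>B. \<forall>y\<in>B. x \<noteq> y \<longrightarrow> bmult x y \<notin> {(a, -a), (c, -c)})"
    then obtain A B where h: "A \<union> B = bicyclic"
      "\<forall>x\<in>A. \<forall>y\<in>A. x \<noteq> y \<longrightarrow> bmult x y \<notin> {(a, -a), (c, -c)}"
      "\<forall>x\<in>B. \<forall>y\<in>B. x \<noteq> y \<longrightarrow> bmult x y \<notin> {(a, -a), (c, -c)}"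
      by blast
    have "x \<in> A \<or> x \<in> B" "y \<in> A \<or> y \<in> B" "z \<in> A \<or> z \<in> B"
      using xB yB zB h(1) by auto
    then show False using h(2,3) xy yz xz by metis
  qed
qed

end
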